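(* Let $d\ge2$, $T>1$, $\eta,\beta>0$, and let $\mathbf r_1,\mathbf r_2,\dots\in[0,1]^d\setminus\{\mathbf 0\}$ be any sequence of returns. Then for all $t\ge1$, the regularizer $\Phi_t$ of DONS (as in the context) is a self-concordant function on the interior of $\mathcal C_{d-1}$ with constant $M_{\Phi_t}\le\sqrt{\eta e}$.
   Context: Notation. $\mathcal C_{d-1}=\{\mathbf u\in\mathbb R^{d-1}: u_i\ge0,\ \sum_iu_i\le1\}$; for $\mathbf v\in\mathbb R^{d-1}$, $\bar{\mathbf v}=(v_1,\dots,v_{d-1},1-\sum_{i=1}^{d-1}v_i)\in\mathbb R^d$, i.e. $\bar{\mathbf v}=\mathbf e_d+J^\top\mathbf v$ with $J=[I_{d-1}\ \ -\mathbf 1]$; $\mathbf 1$ is all-ones; $\|\mathbf x\|_A=\sqrt{\mathbf x^\top A\mathbf x}$. Self-concordance: for a convex compact $\mathcal K$ with nonempty interior, a convex $f:\operatorname{int}\mathcal K\to\mathbb R$ is self-concordant with constant $M\ge0$ if $f$ is $C^3$, $f(\mathbf x_k)\to+\infty$ as $\mathbf x_k\to\mathbf x\in\partial\mathcal K$, and $|\nabla^3f(\mathbf x)[\mathbf u,\mathbf u,\mathbf u]|\le2M\|\mathbf u\|^3_{\nabla^2f(\mathbf x)}$ for all $\mathbf x\in\operatorname{int}\mathcal K$, $\mathbf u$. DONS (parameters $\eta,\beta>0$, horizon $T$). Set $\mathbf w_1=\mathbf 1/d\in\mathbb R^{d-1}$, $\boldsymbol\rho_0=d\mathbf 1\in\mathbb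 R^d$. For $t\ge0$ let $\eta_{t,i}=\eta\exp(\log_T(\rho_{t,i}/d))$, $\Psi_t(\mathbf x)=-\sum_{i=1}^d\ln(\bar x_i)/\eta_{t,i}$, $\Phi_t(\mathbf x)=\Psi_t(\mathbf x)+\frac{\beta d}{8}\|\mathbf x\|^2+\frac\beta8\sum_{s=1}^t\langle\mathbf g_s,\mathbf x-\mathbf w_s\rangle^2$. At round $t=1,2,\dots$: play $\mathbf u_t=(1-\frac1T)\mathbf w_t+\frac1{dT}\mathbf 1$; observe $\mathbf r_t$, set $\mathbf g_t=J\mathbf r_t/\langle\mathbf r_t,\bar{\mathbf u}_t\rangle$; for $i\in\{1,\dots,d\}$, $\rho_{t,i}=1/\bar u_{t,i}$ if $2\rho_{t-1,i}<1/\bar u_{t,i}$, else $\rho_{t,i}=\rho_{t-1,i}$; set $\boldsymbol\nabla_t=\nabla\Phi_t(\mathbf w_t)+\sum_{s=1}^t(\mathbf g_s-\nabla\Psi_s(\mathbf w_s)+\nabla\Psi_{s-1}(\mathbf w_s))$ and $\mathbf w_{t+1}=\mathbf w_t-\frac{(\nabla^2\Phi_t(\mathbf w_t))^{-1}\boldsymbol\nabla_t}{1+4\sqrt{e\eta}\|\boldsymbol\nabla_t\|_{(\nabla^2\Phi_t(\mathbf w_t))^{-1}}}$. *)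

theory Defs
  imports "HOL-Analysis.Analysis"
begin

text \<open>Conventions. The ambient space R^(d-1) is real^'n (so d - 1 = CARD('n) >= 1, i.e. d >= 2),
 and R^d is real^('n option), the coordinate None playing the role of the d-th coordinate.\<close>

definition dim_d :: "'n::finite itself \<Rightarrow> real" where
  "dim_d _ = real CARD('n option)"

definition bar :: "real^'n::finite \<Rightarrow> real^('n option)" where
  "bar v = (\<chi> i. case i of Some j \<Rightarrow> v$j | None \<Rightarrow> 1 - (\<Sum>j\<in>UNIV. v$j))"

text \<open>J = [I_(d-1)  -1], so (J r)_j = r_j - r_d\<close>
definition Jmap :: "real^('n::finite option) \<Rightarrow> real^'n" where
  "Jmap r = (\<chi> j. r$(Some j) - r$None)"

definition simplexC :: "(real^'n::finite) set" where
  "simplexC = {u. (\<forall>i. 0 \<le> u$i) \<and> (\<Sum>i\<in>UNIV. u$i) \<le> 1}"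

definition grad :: "(real^'n::finite \<Rightarrow> real) \<Rightarrow> real^'n \<Rightarrow> real^'n" where
  "grad f x = (\<chi> i. frechet_derivative f (at x) (axis i 1))"

definition hess :: "(real^'n::finite \<Rightarrow> real) \<Rightarrow> real^'n \<Rightarrow> real^'n^'n" where
  "hess f x = (\<chi> i j. frechet_derivative (\<lambda>y. frechet_derivative f (at y) (axis j 1)) (at x) (axis i 1))"

fun cont_diff :: "nat \<Rightarrow> ('a::real_normed_vector) set \<Rightarrow> ('a \<Rightarrow> real) \<Rightarrow> bool" where
  "cont_diff 0 S f = continuous_on S f"
| "cont_diff (Suc k) S f = ((\<forall>x\<in>S. f differentiable (at x)) \<and>
      (\<forall>v. cont_diff k S (\<lambda>x. frechet_derivative f (at x) v)))"

definition D2 :: "('a::real_normed_vector \<Rightarrow> real) \<Rightarrow> 'a \<Rightarrow> 'a \<Rightarrow> real" where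
  "D2 f x u = frechet_derivative (\<lambda>y. frechet_derivative f (at y) u) (at x) u"

definition D3 :: "('a::real_normed_vector \<Rightarrow> real) \<Rightarrow> 'a \<Rightarrow> 'a \<Rightarrow> real" where
  "D3 f x u = frechet_derivative (\<lambda>z. frechet_derivative (\<lambda>y. frechet_derivative f (at y) u) (at z) u) (at x) u"

definition self_concordant :: "('a::euclidean_space) set \<Rightarrow> ('a \<Rightarrow> real) \<Rightarrow> real \<Rightarrow> bool" where
  "self_concordant K f M \<longleftrightarrow>
     convex K \<and> compact K \<and> interior K \<noteq> {} \<and> M \<ge> 0 \<and>
     convex_on (interior K) f \<and>
     cont_diff 3 (interior K) f \<and>
     (\<forall>xs x. (\<forall>k. xs k \<in> interior K) \<longrightarrow> xs \<longlonglongrightarrow> x \<longrightarrow> x \<in> frontier K \<longrightarrow>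
        filterlim (\<lambda>k. f (xs k)) at_top sequentially) \<and>
     (\<forall>x\<in>interior K. \<forall>u. \<bar>D3 f x u\<bar> \<le> 2 * M * (sqrt (D2 f x u)) ^ 3)"

definition dons_eta :: "real \<Rightarrow> nat \<Rightarrow> real^('n::finite option) \<Rightarrow> 'n option \<Rightarrow> real" where
  "dons_eta \<eta> T rho i = \<eta> * exp (log (real T) (rho$i / dim_d TYPE('n)))"

definition dons_Psi :: "real \<Rightarrow> nat \<Rightarrow> real^('n::finite option) \<Rightarrow> real^'n \<Rightarrow> real" where
  "dons_Psi \<eta> T rho x = - (\<Sum>i\<in>UNIV. ln (bar x $ i) / dons_eta \<eta> T rho i)"

definition dons_Phi :: "real \<Rightarrow> real \<Rightarrow> nat \<Rightarrow> (nat \<Rightarrow> real^('n::finite option)) \<Rightarrow>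
    (nat \<Rightarrow> real^'n) \<Rightarrow> (nat \<Rightarrow> real^'n) \<Rightarrow> nat \<Rightarrow> real^'n \<Rightarrow> real" where
  "dons_Phi \<eta> \<beta> T rho g w t x = dons_Psi \<eta> T (rho t) x + \<beta> * dim_d TYPE('n) / 8 * (norm x)^2
      + \<beta> / 8 * (\<Sum>s\<in>{1..t}. (g s \<bullet> (x - w s))^2)"

end

theory Submission imports Defs begin

definition Lk :: "real^'n::finite \<Rightarrow> 'n option \<Rightarrow> real" where
  "Lk v k = (case k of Some j \<Rightarrow> v$j | None \<Rightarrow> - (\<Sum>j\<in>UNIV. v$j))"

lemma bar_has_derivative:
  "((\<lambda>x. bar x $ k) has_derivative (\<lambda>v. Lk v k)) (at x within X)"
proof (cases k)
  case None
  show ?thesis unfolding bar_def Lk_def None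
    by (auto intro!: derivative_eq_intros bounded_linear_imp_has_derivative simp: sum_negf)
next
  case (Some j)
  show ?thesis unfolding bar_def Lk_def Some
    by (auto intro!: derivative_eq_intros bounded_linear_imp_has_derivative)
qed

lemma Lk_linear: "Lk (a *\<^sub>R u + b *\<^sub>R v) k = a * Lk u k + b * Lk v k"
  by (cases k) (auto simp: Lk_def sum.distrib sum_distrib_left algebra_simps)

lemma bar_diff: "bar (x - a *\<^sub>R p) $ k = bar x $ k - a * Lk p k"
  by (cases k) (auto simp: Lk_def bar_def sum_subtractf sum_distrib_left algebra_simps)

lemma bar_comb: "bar (u *\<^sub>R x + v *\<^sub>R y) $ k = u * bar x $ k + v * bar y $ k + (1 - u - v) * (case k of Some j \<Rightarrow> 0 | None \<Rightarrow> 1)"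
  by (cases k) (auto simp: bar_def sum.distrib sum_distrib_left algebra_simps)


definition PhiG :: "('n option \<Rightarrow> real) \<Rightarrow> real \<Rightarrow> real \<Rightarrow> nat \<Rightarrow> (nat \<Rightarrow> real^'n) \<Rightarrow> (nat \<Rightarrow> real^'n) \<Rightarrow> real^'n::finite \<Rightarrow> real" where
  "PhiG c a b t g w x = (\<Sum>k\<in>UNIV. c k * (- ln (bar x $ k))) + a * (x \<bullet> x) + b * (\<Sum>s\<in>{1..t}. (g s \<bullet> (x - w s))^2)"

definition P1 :: "('n option \<Rightarrow> real) \<Rightarrow> real \<Rightarrow> real \<Rightarrow> nat \<Rightarrow> (nat \<Rightarrow> real^'n) \<Rightarrow> (nat \<Rightarrow> real^'n) \<Rightarrow> real^'n::finite \<Rightarrow> real^'n \<Rightarrow> real" where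
  "P1 c a b t g w v x = (\<Sum>k\<in>UNIV. - (c k * Lk v k / bar x $ k)) + a * (2 * (x \<bullet> v)) + b * (\<Sum>s\<in>{1..t}. 2 * (g s \<bullet> (x - w s)) * (g s \<bullet> v))"

definition P2 :: "('n option \<Rightarrow> real) \<Rightarrow> real \<Rightarrow> real \<Rightarrow> nat \<Rightarrow> (nat \<Rightarrow> real^'n) \<Rightarrow> real^'n::finite \<Rightarrow> real^'n \<Rightarrow> real^'n \<Rightarrow> real" where
  "P2 c a b t g u v x = (\<Sum>k\<in>UNIV. c k * Lk v k * Lk u k / (bar x $ k)^2) + a * (2 * (u \<bullet> v)) + b * (\<Sum>s\<in>{1..t}. 2 * (g s \<bullet> u) * (g s \<bullet> v))"

definition P3 :: "('n option \<Rightarrow> real) \<Rightarrow> real^'n::finite \<Rightarrow> real^'n \<Rightarrow> real^'n \<Rightarrow> real^'n \<Rightarrow> real" where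
  "P3 c z u v x = (\<Sum>k\<in>UNIV. - (2 * c k * Lk v k * Lk u k * Lk z k / (bar x $ k)^3))"

lemma PhiG_deriv:
  assumes "\<forall>k. bar x $ k > 0"
  shows "(PhiG c a b t g w has_derivative (\<lambda>v. P1 c a b t g w v x)) (at x)"
  unfolding PhiG_def[abs_def] P1_def
  apply (rule derivative_eq_intros refl bar_has_derivative | use assms in force)+
  apply (auto simp: field_simps inner_commute sum_distrib_left intro!: sum.cong)
  done


lemma inv_bar_deriv:
  assumes "bar x $ k > 0"
  shows "((\<lambda>y. C / bar y $ k) has_derivative (\<lambda>u. - (C * Lk u k / (bar x $ k)^2))) (at x)"
  apply (rule derivative_eq_intros refl bar_has_derivative)+
  using assms by (auto simp: field_simps power2_eq_square)

lemma inv2_bar_deriv: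
  assumes "bar x $ k > 0"
  shows "((\<lambda>y. C / (bar y $ k)^2) has_derivative (\<lambda>u. - (2 * C * Lk u k / (bar x $ k)^3))) (at x)"
  apply (rule derivative_eq_intros refl bar_has_derivative)+
  using assms by (auto simp: field_simps power2_eq_square power3_eq_cube)

lemma P1_deriv:
  assumes "\<forall>k. bar x $ k > 0"
  shows "((P1 c a b t g w v) has_derivative (\<lambda>u. P2 c a b t g u v x)) (at x)"
proof -
  have h1: "((\<lambda>y. \<Sum>k\<in>UNIV. - (c k * Lk v k / bar y $ k)) has_derivative
     (\<lambda>u. \<Sum>k\<in>UNIV. c k * Lk v k * Lk u k / (bar x $ k)^2)) (at x)"
    apply (rule has_derivative_sum)
    apply (rule has_derivative_minus[OF inv_bar_deriv, THEN has_derivative_eq_rhs])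
    using assms by auto
  have h2: "((\<lambda>y. a * (2 * (y \<bullet> v))) has_derivative (\<lambda>u. a * (2 * (u \<bullet> v)))) (at x)"
    by (auto intro!: derivative_eq_intros)
  have h3: "((\<lambda>y. b * (\<Sum>s\<in>{1..t}. 2 * (g s \<bullet> (y - w s)) * (g s \<bullet> v))) has_derivative
     (\<lambda>u. b * (\<Sum>s\<in>{1..t}. 2 * (g s \<bullet> u) * (g s \<bullet> v)))) (at x)"
    by (auto intro!: derivative_eq_intros)
  show ?thesis
    unfolding P1_def[abs_def] P2_def
    using has_derivative_add[OF has_derivative_add[OF h1 h2] h3] by simp
qed

lemma P2_deriv:
  assumes "\<forall>k. bar x $ k > 0"
  shows "((P2 c a b t g u v) has_derivative (\<lambda>z. P3 c z u v x)) (at x)"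
proof -
  have h1: "((\<lambda>y. \<Sum>k\<in>UNIV. c k * Lk v k * Lk u k / (bar y $ k)^2) has_derivative
     (\<lambda>z. P3 c z u v x)) (at x)"
    unfolding P3_def
    apply (rule has_derivative_sum[OF inv2_bar_deriv, THEN has_derivative_eq_rhs])
    using assms by (auto simp: mult_ac)
  show ?thesis
    unfolding P2_def[abs_def]
    using has_derivative_add[OF has_derivative_add[OF h1 has_derivative_const] has_derivative_const] by simp
qed


definition Spos :: "(real^'n::finite) set" where "Spos = {x. \<forall>k. 0 < bar x $ k}"

lemma Spos_ne: "x \<in> Spos \<Longrightarrow> bar x $ k \<noteq> 0"
  unfolding Spos_def by (metis less_irrefl mem_Collect_eq)

lemma bar_cont: "continuous_on A (\<lambda>x. bar x $ k)"
  by (rule has_derivative_continuous_on) (use bar_has_derivative in blast)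

lemma open_Spos: "open Spos"
proof -
  have "Spos = (\<Inter>k\<in>UNIV. {x. 0 < bar x $ k})" by (auto simp: Spos_def)
  moreover have "open {x::real^'a. 0 < bar x $ k}" for k
    by (rule open_Collect_less) (auto intro: bar_cont)
  ultimately show ?thesis by (metis finite_class.finite_UNIV open_INT)
qed

lemma cont_diff_cong:
  assumes "open S" "\<And>x. x \<in> S \<Longrightarrow> f x = g x"
  shows "cont_diff k S f = cont_diff k S g"
  using assms(2)
proof (induction k arbitrary: f g)
  case 0
  then show ?case by (auto intro: continuous_on_cong)
next
  case (Suc k)
  have hd: "(f has_derivative f') (at x) \<longleftrightarrow> (g has_derivative f') (at x)" if "x \<in> S" for x f'
  proof
    assume "(f has_derivative f') (at x)"
    then show "(g has_derivative f') (at x)"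
      by (rule has_derivative_transform_within_open[OF _ assms(1) that]) (use Suc.prems in auto)
  next
    assume "(g has_derivative f') (at x)"
    then show "(f has_derivative f') (at x)"
      by (rule has_derivative_transform_within_open[OF _ assms(1) that]) (use Suc.prems in auto)
  qed
  have fd: "frechet_derivative f (at x) = frechet_derivative g (at x)" if "x \<in> S" for x
    unfolding frechet_derivative_def using hd[OF that] by simp
  have diff: "(\<forall>x\<in>S. f differentiable (at x)) \<longleftrightarrow> (\<forall>x\<in>S. g differentiable (at x))"
    unfolding differentiable_def using hd by auto
  have "cont_diff k S (\<lambda>x. frechet_derivative f (at x) v) = cont_diff k S (\<lambda>x. frechet_derivative g (at x) v)" for v
    by (rule Suc.IH) (simp add: fd)
  then show ?case using diff by simp
qed


lemma fd_transfer:
  assumes "open S" "x \<in> S" "\<And>y. y \<in> S \<Longrightarrow> f y = g y" "(g has_derivative g') (at x)"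
  shows "frechet_derivative f (at x) = g'"
proof -
  have "(f has_derivative g') (at x)"
    by (rule has_derivative_transform_within_open[OF assms(4) assms(1,2)]) (use assms(3) in auto)
  from frechet_derivative_at[OF this] show ?thesis by simp
qed

context
  fixes c :: "'n::finite option \<Rightarrow> real" and a b :: real and t :: nat and g w :: "nat \<Rightarrow> real^'n"
begin

lemma fd1: "x \<in> Spos \<Longrightarrow> frechet_derivative (PhiG c a b t g w) (at x) v = P1 c a b t g w v x"
proof -
  assume "x \<in> Spos"
  then have h: "(PhiG c a b t g w has_derivative (\<lambda>v. P1 c a b t g w v x)) (at x)"
    using PhiG_deriv by (auto simp: Spos_def)
  show ?thesis using fun_cong[OF frechet_derivative_at[OF h], of v] by (rule sym)
qed

lemma fd2: "x \<in> Spos \<Longrightarrow> frechet_derivative (\<lambda>y. frechet_derivative (PhiG c a b t g w) (at y) v) (at x)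
   = (\<lambda>u. P2 c a b t g u v x)"
  by (rule fd_transfer[OF open_Spos, where g = "P1 c a b t g w v"]) (auto simp: fd1 Spos_def intro!: P1_deriv)

lemma fd3: "x \<in> Spos \<Longrightarrow> frechet_derivative (\<lambda>z. frechet_derivative (\<lambda>y. frechet_derivative (PhiG c a b t g w) (at y) v) (at z) u) (at x)
   = (\<lambda>q. P3 c q u v x)"
  by (rule fd_transfer[OF open_Spos, where g = "P2 c a b t g u v"]) (auto simp: fd2 Spos_def intro!: P2_deriv)

lemma D2_eq: "x \<in> Spos \<Longrightarrow> D2 (PhiG c a b t g w) x u = P2 c a b t g u u x"
  by (simp add: D2_def fd2)

lemma D3_eq: "x \<in> Spos \<Longrightarrow> D3 (PhiG c a b t g w) x u = P3 c u u u x"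
  by (simp add: D3_def fd3)

lemma hess_eq: "x \<in> Spos \<Longrightarrow> hess (PhiG c a b t g w) x $ i $ j = P2 c a b t g (axis i 1) (axis j 1) x"
  by (simp add: hess_def fd2)

lemma P3_cont: "continuous_on Spos (P3 c q u v)"
  unfolding P3_def[abs_def]
  apply (intro continuous_on_sum continuous_on_minus continuous_on_divide continuous_on_power continuous_on_const bar_cont)
  using Spos_ne by auto

lemma fdP1: "x \<in> Spos \<Longrightarrow> frechet_derivative (P1 c a b t g w v) (at x) u = P2 c a b t g u v x"
proof -
  assume "x \<in> Spos"
  then have h: "(P1 c a b t g w v has_derivative (\<lambda>u. P2 c a b t g u v x)) (at x)"
    using P1_deriv by (auto simp: Spos_def)
  show ?thesis using fun_cong[OF frechet_derivative_at[OF h], of u] by (rule sym)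
qed

lemma fdP2: "x \<in> Spos \<Longrightarrow> frechet_derivative (P2 c a b t g u v) (at x) q = P3 c q u v x"
proof -
  assume "x \<in> Spos"
  then have h: "(P2 c a b t g u v has_derivative (\<lambda>q. P3 c q u v x)) (at x)"
    using P2_deriv by (auto simp: Spos_def)
  show ?thesis using fun_cong[OF frechet_derivative_at[OF h], of q] by (rule sym)
qed

lemma cont_diff_PhiG: "cont_diff 3 Spos (PhiG c a b t g w)"
proof -
  have d0: "\<forall>x\<in>Spos. PhiG c a b t g w differentiable (at x)"
    using PhiG_deriv unfolding Spos_def differentiable_def by blast
  have d1: "\<forall>x\<in>Spos. P1 c a b t g w v differentiable (at x)" for v
    using P1_deriv unfolding Spos_def differentiable_def by blast
  have d2: "\<forall>x\<in>Spos. P2 c a b t g u v differentiable (at x)" for u v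
    using P2_deriv unfolding Spos_def differentiable_def by blast
  have c1: "cont_diff (Suc 0) Spos (P2 c a b t g u v)" for u v
  proof -
    have "cont_diff 0 Spos (\<lambda>x. frechet_derivative (P2 c a b t g u v) (at x) q) = cont_diff 0 Spos (P3 c q u v)" for q
      by (rule cont_diff_cong[OF open_Spos]) (rule fdP2)
    then show ?thesis using d2 P3_cont by (simp only: cont_diff.simps) blast
  qed
  have c2: "cont_diff (Suc (Suc 0)) Spos (P1 c a b t g w v)" for v
  proof -
    have "cont_diff (Suc 0) Spos (\<lambda>x. frechet_derivative (P1 c a b t g w v) (at x) u) = cont_diff (Suc 0) Spos (P2 c a b t g u v)" for u
      by (rule cont_diff_cong[OF open_Spos]) (rule fdP1)
    then show ?thesis using d1 c1 by (simp only: cont_diff.simps) blast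
  qed
  have "cont_diff (Suc (Suc 0)) Spos (\<lambda>x. frechet_derivative (PhiG c a b t g w) (at x) v) = cont_diff (Suc (Suc 0)) Spos (P1 c a b t g w v)" for v
    by (rule cont_diff_cong[OF open_Spos]) (rule fd1)
  then have "cont_diff (Suc (Suc (Suc 0))) Spos (PhiG c a b t g w)" using d0 c2 by (simp only: cont_diff.simps) blast
  then show ?thesis by (simp add: numeral_3_eq_3)
qed

end


lemma simplexC_bar: "simplexC = {x. \<forall>k. 0 \<le> bar x $ k}"
  by (auto simp: simplexC_def bar_def split_option_all)

lemma Spos_sub: "Spos \<subseteq> simplexC"
  by (auto simp: simplexC_bar Spos_def less_imp_le)

lemma bar_le1: "x \<in> simplexC \<Longrightarrow> bar x $ k \<le> 1"
proof (cases k)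
  case None
  assume "x \<in> simplexC"
  then have "0 \<le> (\<Sum>j\<in>UNIV. x $ j)" by (auto simp: simplexC_def intro: sum_nonneg)
  then show ?thesis by (simp add: bar_def None)
next
  case (Some j)
  assume "x \<in> simplexC"
  then have "x $ j \<le> (\<Sum>j\<in>UNIV. x $ j)" "(\<Sum>j\<in>UNIV. x $ j) \<le> 1"
    by (auto simp: simplexC_def intro: member_le_sum)
  then show ?thesis by (simp add: bar_def Some)
qed

lemma closed_simplexC: "closed (simplexC :: (real^'n::finite) set)"
proof -
  have "(simplexC :: (real^'n) set) = (\<Inter>k\<in>UNIV. {x. 0 \<le> bar x $ k})" by (auto simp: simplexC_bar)
  moreover have "closed {x::real^'n. 0 \<le> bar x $ k}" for k
    by (rule closed_Collect_le) (auto intro: bar_cont)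
  ultimately show ?thesis by (metis closed_INT)
qed

lemma compact_simplexC: "compact (simplexC :: (real^'n::finite) set)"
proof -
  have "simplexC \<subseteq> cbox (0::real^'n) 1"
  proof
    fix x :: "real^'n" assume x: "x \<in> simplexC"
    have "0 \<le> x $ i \<and> x $ i \<le> 1" for i
      using bar_le1[OF x, of "Some i"] x by (auto simp: simplexC_def bar_def)
    then show "x \<in> cbox 0 1" by (simp add: mem_box_cart)
  qed
  then have "bounded (simplexC :: (real^'n) set)" by (metis bounded_cbox bounded_subset)
  then show ?thesis using closed_simplexC by (simp add: compact_eq_bounded_closed)
qed

lemma bar_comb1: "u + v = 1 \<Longrightarrow> bar (u *\<^sub>R x + v *\<^sub>R y) $ k = u * bar x $ k + v * bar y $ k"
  by (cases k) (auto simp: bar_def sum.distrib sum_distrib_left algebra_simps)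

lemma convex_simplexC: "convex (simplexC :: (real^'n::finite) set)"
  unfolding convex_def simplexC_bar
  by (auto simp: bar_comb1)

lemma convex_Spos: "convex (Spos :: (real^'n::finite) set)"
  unfolding convex_def Spos_def
proof (intro ballI allI impI, clarsimp simp: bar_comb1)
  fix x y :: "real^'n" and u v :: real and k
  assume "\<forall>k. 0 < bar x $ k" "\<forall>k. 0 < bar y $ k" "0 \<le> u" "0 \<le> v" "u + v = 1"
  then show "0 < u * bar x $ k + v * bar y $ k"
    by (smt (verit) mult_nonneg_nonneg mult_pos_pos)
qed

lemma Lk_axis: "Lk (axis j 1) (Some j) = 1" "Lk (axis j 1) None = -1"
  by (auto simp: Lk_def axis_def)

lemma interior_simplexC: "interior simplexC = Spos"
proof
  show "Spos \<subseteq> interior simplexC"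
    using open_Spos Spos_sub by (rule interior_maximal[rotated])
next
  show "interior simplexC \<subseteq> Spos"
  proof
    fix x assume "x \<in> interior simplexC"
    then obtain e where e: "e > 0" "ball x e \<subseteq> simplexC" by (meson mem_interior)
    have x: "x \<in> simplexC" using e centre_in_ball by blast
    have "0 < bar x $ k" for k
    proof (rule ccontr)
      assume "\<not> 0 < bar x $ k"
      then have k0: "bar x $ k = 0" using x by (auto simp: simplexC_bar intro: antisym)
      define a where "a = (case k of Some _ \<Rightarrow> e/2 | None \<Rightarrow> - e/2)"
      define j' where "j' = (case k of Some i \<Rightarrow> i | None \<Rightarrow> undefined)"
      define y where "y = x - a *\<^sub>R axis j' 1"
      have "dist x y = e/2" using e by (cases k) (auto simp: y_def a_def dist_norm norm_axis_1)
      then have ysim: "y \<in> simplexC" using e by auto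
      have "bar y $ k = bar x $ k - a * Lk (axis j' 1) k" by (simp only: y_def bar_diff)
      moreover have "a * Lk (axis j' 1) k = e/2"
        by (cases k) (auto simp: a_def j'_def Lk_axis)
      ultimately have "bar y $ k = - e/2" using k0 by simp
      then show False using e ysim by (auto simp: simplexC_bar dest: spec[where x=k])
    qed
    then show "x \<in> Spos" by (simp add: Spos_def)
  qed
qed

lemma frontier_simplexC: "x \<in> frontier simplexC \<Longrightarrow> x \<in> simplexC \<and> (\<exists>k. bar x $ k = 0)"
proof -
  assume "x \<in> frontier simplexC"
  then have "x \<in> simplexC" "x \<notin> Spos"
    by (auto simp: frontier_def interior_simplexC closure_closed[OF closed_simplexC])
  then obtain k where k1: "\<not> 0 < bar x $ k" "0 \<le> bar x $ k" unfolding Spos_def simplexC_bar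
    apply simp
    apply (erule exE)
    apply (drule_tac x=k in spec)
    apply simp
    done
  then have "bar x $ k = 0" by linarith
  then show ?thesis using \<open>x \<in> simplexC\<close> by blast
qed

lemma Spos_nonempty: "Spos \<noteq> ({} :: (real^'n::finite) set)"
proof -
  define x :: "real^'n" where "x = (\<chi> i. 1 / (real CARD('n) + 1))"
  have "bar x $ k > 0" for k
    by (cases k) (auto simp: x_def bar_def field_simps)
  then show ?thesis by (auto simp: Spos_def)
qed


lemma convex_on_affine_comp:
  fixes l :: "'a::real_vector \<Rightarrow> real" and h :: "real \<Rightarrow> real"
  assumes "convex_on I h" "convex S" "\<And>x. x \<in> S \<Longrightarrow> l x \<in> I"
    "\<And>x y u v. u + v = 1 \<Longrightarrow> l (u *\<^sub>R x + v *\<^sub>R y) = u * l x + v * l y"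
  shows "convex_on S (\<lambda>x. h (l x))"
  unfolding convex_on_def
proof (intro conjI assms(2) ballI allI impI)
  fix x y and u v :: real assume xy: "x \<in> S" "y \<in> S" and uv: "0 \<le> u" "0 \<le> v" "u + v = 1"
  have "h (l (u *\<^sub>R x + v *\<^sub>R y)) = h (u *\<^sub>R l x + v *\<^sub>R l y)" using assms(4)[OF uv(3)] by simp
  also have "\<dots> \<le> u * h (l x) + v * h (l y)"
    using assms(1) assms(3)[OF xy(1)] assms(3)[OF xy(2)] uv unfolding convex_on_def by blast
  finally show "h (l (u *\<^sub>R x + v *\<^sub>R y)) \<le> u * h (l x) + v * h (l y)" .
qed

lemma convex_on_sumf:
  assumes "finite A" "convex S" "\<And>i. i \<in> A \<Longrightarrow> convex_on S (f i)"
  shows "convex_on S (\<lambda>x. \<Sum>i\<in>A. f i x)"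
  using assms(1,3)
proof (induction A rule: finite_induct)
  case empty
  then show ?case using assms(2) by (simp add: convex_on_const)
next
  case (insert i A)
  then show ?case by (simp add: convex_on_add)
qed

lemma convex_PhiG:
  fixes c :: "'n::finite option \<Rightarrow> real" and g w :: "nat \<Rightarrow> real^'n"
  assumes "\<forall>k. c k \<ge> 0" "a \<ge> 0" "b \<ge> 0"
  shows "convex_on Spos (PhiG c a b t g w)"
proof -
  have nl: "convex_on {0<..} (\<lambda>y::real. - ln y)"
    using ln_concave by (simp add: concave_on_def)
  have t1: "convex_on Spos (\<lambda>x. \<Sum>k\<in>UNIV. c k * (- ln (bar x $ k)))"
  proof (rule convex_on_sumf[OF _ convex_Spos])
    fix k :: "'n option"
    have "convex_on Spos (\<lambda>x. - ln (bar x $ k))"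
      by (rule convex_on_affine_comp[OF nl convex_Spos]) (auto simp: Spos_def bar_comb1)
    then show "convex_on Spos (\<lambda>x. c k * (- ln (bar x $ k)))"
      using assms(1) by (intro convex_on_cmul) auto
  qed simp
  have sq: "convex_on UNIV (\<lambda>y::real. y^2)" using convex_power2 by simp
  have t2: "convex_on Spos (\<lambda>x::real^'n. a * (x \<bullet> x))"
  proof -
    have "convex_on Spos (\<lambda>x::real^'n. \<Sum>j\<in>UNIV. (x $ j)^2)"
    proof (rule convex_on_sumf[OF _ convex_Spos])
      fix j :: 'n
      show "convex_on Spos (\<lambda>x::real^'n. (x $ j)^2)"
        by (rule convex_on_affine_comp[OF sq convex_Spos]) auto
    qed simp
    moreover have "(\<lambda>x::real^'n. \<Sum>j\<in>UNIV. (x $ j)^2) = (\<lambda>x::real^'n. x \<bullet> x)"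
      by (auto simp: inner_vec_def power2_eq_square)
    ultimately show ?thesis using assms(2) by (intro convex_on_cmul) auto
  qed
  have t3: "convex_on Spos (\<lambda>x. b * (\<Sum>s\<in>{1..t}. (g s \<bullet> (x - w s))^2))"
  proof -
    have "convex_on Spos (\<lambda>x. \<Sum>s\<in>{1..t}. (g s \<bullet> (x - w s))^2)"
    proof (rule convex_on_sumf[OF _ convex_Spos])
      fix s
      show "convex_on Spos (\<lambda>x. (g s \<bullet> (x - w s))^2)"
      proof (rule convex_on_affine_comp[OF sq convex_Spos])
        fix x y :: "real^'n" and u v :: real assume "u + v = 1"
        then have "w s = u *\<^sub>R w s + v *\<^sub>R w s" by (metis scaleR_add_left scaleR_one)
        then have "g s \<bullet> (u *\<^sub>R x + v *\<^sub>R y - w s) = g s \<bullet> (u *\<^sub>R (x - w s) + v *\<^sub>R (y - w s))"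
          by (metis (no_types, lifting) add_diff_add scaleR_right_diff_distrib)
        then show "g s \<bullet> (u *\<^sub>R x + v *\<^sub>R y - w s) = u * (g s \<bullet> (x - w s)) + v * (g s \<bullet> (y - w s))"
          by (simp add: inner_add_right)
      qed auto
    qed simp
    then show ?thesis using assms(3) by (intro convex_on_cmul) auto
  qed
  show ?thesis unfolding PhiG_def[abs_def]
    by (intro convex_on_add t1 t2 t3)
qed


lemma sc_ineq:
  fixes c :: "'n::finite option \<Rightarrow> real" and g :: "nat \<Rightarrow> real^'n"
  assumes x: "x \<in> Spos" and E: "E > 0" and cE: "\<forall>k. c k \<ge> 1 / E" and ab: "a \<ge> 0" "b \<ge> 0"
  shows "\<bar>P3 c u u u x\<bar> \<le> 2 * sqrt E * (sqrt (P2 c a b t g u u x))^3"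
proof -
  define y where "y k = Lk u k / bar x $ k" for k
  define B where "B = (\<Sum>k\<in>UNIV. c k * (y k)^2)"
  define D where "D = P2 c a b t g u u x"
  have cpos: "c k > 0" for k using cE E by (metis less_le_trans zero_less_divide_1_iff)
  have bx: "bar x $ k > 0" for k using x by (simp add: Spos_def)
  have cabs: "\<bar>c k\<bar> = c k" for k using cpos[of k] by simp
  have B0: "B \<ge> 0" unfolding B_def by (intro sum_nonneg) (auto intro!: mult_nonneg_nonneg less_imp_le[OF cpos])
  have P2e: "D = B + a * (2 * (u \<bullet> u)) + b * (\<Sum>s\<in>{1..t}. 2 * (g s \<bullet> u) * (g s \<bullet> u))"
    unfolding D_def P2_def B_def y_def by (auto simp: power2_eq_square field_simps intro!: sum.cong)
  have "a * (2 * (u \<bullet> u)) \<ge> 0" using ab by simp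
  moreover have "b * (\<Sum>s\<in>{1..t}. 2 * (g s \<bullet> u) * (g s \<bullet> u)) \<ge> 0"
    by (intro mult_nonneg_nonneg[OF ab(2)] sum_nonneg) (simp add: mult.assoc)
  ultimately have BD: "B \<le> D" using P2e by linarith
  have D0: "D \<ge> 0" using B0 BD by linarith
  have yk: "\<bar>y k\<bar> \<le> sqrt E * sqrt D" for k
  proof -
    have "c k * (y k)^2 \<le> B" unfolding B_def
      by (rule member_le_sum) (auto intro!: mult_nonneg_nonneg less_imp_le[OF cpos])
    moreover have "(y k)^2 \<le> E * (c k * (y k)^2)"
    proof -
      have "1 \<le> E * c k" using cE E by (simp add: field_simps)
      then have "1 * (y k)^2 \<le> (E * c k) * (y k)^2" by (intro mult_right_mono) auto
      then show ?thesis by (simp add: mult_ac)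
    qed
    ultimately have "(y k)^2 \<le> E * D" using BD E by (smt (verit) mult_left_mono)
    then have "sqrt ((y k)^2) \<le> sqrt (E * D)" by (rule real_sqrt_le_mono)
    then show ?thesis by (simp add: real_sqrt_mult)
  qed
  have P3e: "P3 c u u u x = - 2 * (\<Sum>k\<in>UNIV. c k * (y k)^3)"
    unfolding P3_def y_def by (auto simp: sum_negf sum_distrib_left power3_eq_cube field_simps intro!: sum.cong)
  have "\<bar>\<Sum>k\<in>UNIV. c k * (y k)^3\<bar> \<le> (\<Sum>k\<in>UNIV. \<bar>c k * (y k)^3\<bar>)" by (rule sum_abs)
  also have "\<dots> = (\<Sum>k\<in>UNIV. (c k * (y k)^2) * \<bar>y k\<bar>)"
    by (intro sum.cong) (auto simp: abs_mult power2_eq_square power3_eq_cube cabs)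
  also have "\<dots> \<le> (\<Sum>k\<in>UNIV. (c k * (y k)^2) * (sqrt E * sqrt D))"
    using yk by (intro sum_mono mult_left_mono) (auto intro!: mult_nonneg_nonneg less_imp_le[OF cpos])
  also have "\<dots> = B * (sqrt E * sqrt D)" by (simp add: B_def sum_distrib_right)
  also have "\<dots> \<le> D * (sqrt E * sqrt D)" using BD E D0 by (intro mult_right_mono) auto
  also have "\<dots> = sqrt E * (sqrt D)^3" using D0 by (simp add: power3_eq_cube mult_ac)
  finally have "\<bar>\<Sum>k\<in>UNIV. c k * (y k)^3\<bar> \<le> sqrt E * (sqrt D)^3" .
  then show ?thesis unfolding D_def[symmetric] P3e by (simp add: abs_mult)
qed


lemma blowup:
  fixes c :: "'n::finite option \<Rightarrow> real" and g w :: "nat \<Rightarrow> real^'n"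
  assumes cpos: "\<And>k. c k > 0" and ab: "a \<ge> 0" "b \<ge> 0"
    and xs: "\<And>n. xs n \<in> Spos" and lim: "xs \<longlonglongrightarrow> x" and fr: "x \<in> frontier simplexC"
  shows "filterlim (\<lambda>n. PhiG c a b t g w (xs n)) at_top sequentially"
proof -
  obtain k0 where k0: "bar x $ k0 = 0" using frontier_simplexC[OF fr] by blast
  have cont: "isCont (\<lambda>x. bar x $ k0) x"
    using bar_has_derivative[of k0 x UNIV] has_derivative_continuous by blast
  have "(\<lambda>n. bar (xs n) $ k0) \<longlonglongrightarrow> 0"
    using isCont_tendsto_compose[OF cont lim] k0 by simp
  moreover have "\<forall>\<^sub>F n in sequentially. 0 < bar (xs n) $ k0"
    using xs by (simp add: Spos_def)
  ultimately have "filterlim (\<lambda>n. bar (xs n) $ k0) (at_right 0) sequentially"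
    by (rule tendsto_imp_filterlim_at_right)
  then have "filterlim (\<lambda>n. ln (bar (xs n) $ k0)) at_bot sequentially"
    by (rule filterlim_compose[OF ln_at_0])
  then have "filterlim (\<lambda>n. - ln (bar (xs n) $ k0)) at_top sequentially"
    by (simp add: filterlim_uminus_at_bot)
  then have lim2: "filterlim (\<lambda>n. c k0 * (- ln (bar (xs n) $ k0))) at_top sequentially"
    by (rule filterlim_tendsto_pos_mult_at_top[OF tendsto_const cpos])
  show ?thesis
  proof (rule filterlim_at_top_mono[OF lim2], rule always_eventually, rule allI)
    fix n
    have sn: "xs n \<in> simplexC" using xs Spos_sub by blast
    have trm: "0 \<le> c k * (- ln (bar (xs n) $ k))" for k
    proof -
      have "0 < bar (xs n) $ k" using xs[of n] by (simp add: Spos_def)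
      moreover have "bar (xs n) $ k \<le> 1" using bar_le1[OF sn] .
      ultimately have "ln (bar (xs n) $ k) \<le> 0" by simp
      then show ?thesis using cpos[of k] by (simp add: mult_nonneg_nonpos less_imp_le)
    qed
    have "c k0 * (- ln (bar (xs n) $ k0)) \<le> (\<Sum>k\<in>UNIV. c k * (- ln (bar (xs n) $ k)))"
      using trm by (intro member_le_sum) (blast, blast, simp)
    moreover have "0 \<le> a * (xs n \<bullet> xs n)" using ab by simp
    moreover have "0 \<le> b * (\<Sum>s\<in>{1..t}. (g s \<bullet> (xs n - w s))^2)"
      using ab by (intro mult_nonneg_nonneg sum_nonneg) auto
    ultimately show "c k0 * (- ln (bar (xs n) $ k0)) \<le> PhiG c a b t g w (xs n)"
      unfolding PhiG_def by linarith
  qed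
qed

lemma sc_PhiG:
  fixes c :: "'n::finite option \<Rightarrow> real" and g w :: "nat \<Rightarrow> real^'n"
  assumes E: "E > 0" and cE: "\<forall>k. c k \<ge> 1 / E" and ab: "a \<ge> 0" "b \<ge> 0"
  shows "self_concordant simplexC (PhiG c a b t g w) (sqrt E)"
proof -
  have cpos: "c k > 0" for k using cE E by (metis less_le_trans zero_less_divide_1_iff)
  show ?thesis
    unfolding self_concordant_def interior_simplexC
  proof (intro conjI allI impI ballI)
    show "convex (simplexC :: (real^'n) set)" by (rule convex_simplexC)
    show "compact (simplexC :: (real^'n) set)" by (rule compact_simplexC)
    show "(Spos :: (real^'n) set) \<noteq> {}" by (rule Spos_nonempty)
    show "0 \<le> sqrt E" using E by simp
    show "convex_on Spos (PhiG c a b t g w)" using cpos ab by (intro convex_PhiG) (auto intro: less_imp_le)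
    show "cont_diff 3 Spos (PhiG c a b t g w)" by (rule cont_diff_PhiG)
  next
    fix xs :: "nat \<Rightarrow> real^'n" and x assume "\<forall>k. xs k \<in> Spos" "xs \<longlonglongrightarrow> x" "x \<in> frontier simplexC"
    then show "filterlim (\<lambda>k. PhiG c a b t g w (xs k)) at_top sequentially"
      using blowup[where c=c, OF cpos ab] by blast
  next
    fix x u :: "real^'n" assume x: "x \<in> Spos"
    show "\<bar>D3 (PhiG c a b t g w) x u\<bar> \<le> 2 * sqrt E * sqrt (D2 (PhiG c a b t g w) x u) ^ 3"
      unfolding D2_eq[OF x] D3_eq[OF x] by (rule sc_ineq[OF x E cE ab])
  qed
qed


lemma linear_expand:
  fixes f :: "real^'n::finite \<Rightarrow> real"
  assumes "linear f"
  shows "f p = (\<Sum>i\<in>UNIV. p $ i * f (axis i 1))"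
proof -
  have "p = (\<Sum>i\<in>UNIV. p $ i *\<^sub>R axis i 1)"
    using basis_expansion[of p] by (simp add: scalar_mult_eq_scaleR)
  then have "f p = f (\<Sum>i\<in>UNIV. p $ i *\<^sub>R axis i 1)" by simp
  also have "\<dots> = (\<Sum>i\<in>UNIV. p $ i * f (axis i 1))"
    using assms by (simp add: real_vector.linear_sum linear_cmul)
  finally show ?thesis .
qed

lemma P2_sym: "P2 c a b t g u v x = P2 c a b t g v u x"
  unfolding P2_def by (simp add: mult_ac inner_commute)

lemma P2_lin1:
  assumes "x \<in> Spos"
  shows "linear (\<lambda>u. P2 c a b t g u v x)"
proof -
  have "((P1 c a b t g w v) has_derivative (\<lambda>u. P2 c a b t g u v x)) (at x)"
    using assms P1_deriv by (auto simp: Spos_def)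
  then show ?thesis using has_derivative_bounded_linear bounded_linear.linear by blast
qed

lemma newton_step:
  fixes c :: "'n::finite option \<Rightarrow> real" and g w :: "nat \<Rightarrow> real^'n"
  assumes x: "x \<in> Spos" and E: "E > 0" and cE: "\<forall>k. c k \<ge> 1 / E" and ab: "a > 0" "b \<ge> 0"
    and H: "H = hess (PhiG c a b t g w) x"
    and p: "p = matrix_inv H *v nab"
  shows "x - (1 / (1 + 4 * sqrt E * sqrt (nab \<bullet> p))) *\<^sub>R p \<in> Spos"
proof -
  have cpos: "c k > 0" for k using cE E by (metis less_le_trans zero_less_divide_1_iff)
  have bx: "bar x $ k > 0" for k using x by (simp add: Spos_def)
  have Hij: "H $ i $ j = P2 c a b t g (axis i 1) (axis j 1) x" for i j
    unfolding H using hess_eq[OF x] .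
  have Hv: "(H *v q) $ i = P2 c a b t g (axis i 1) q x" for q i
  proof -
    have "(H *v q) $ i = (\<Sum>j\<in>UNIV. H $ i $ j * q $ j)"
      by (simp add: matrix_vector_mult_def)
    also have "\<dots> = (\<Sum>j\<in>UNIV. q $ j * P2 c a b t g (axis j 1) (axis i 1) x)"
      by (simp add: Hij P2_sym[of _ _ _ _ _ "axis i 1"] mult.commute)
    also have "\<dots> = P2 c a b t g q (axis i 1) x"
      using linear_expand[OF P2_lin1[OF x], where p=q] by simp
    finally show ?thesis by (simp add: P2_sym)
  qed
  have Hq: "(H *v q) \<bullet> q = P2 c a b t g q q x" for q
  proof -
    have "(H *v q) \<bullet> q = (\<Sum>i\<in>UNIV. q $ i * P2 c a b t g (axis i 1) q x)"
      by (simp add: inner_vec_def Hv mult.commute)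
    also have "\<dots> = P2 c a b t g q q x"
      using linear_expand[OF P2_lin1[OF x], where p=q] by simp
    finally show ?thesis .
  qed
  define S1 where "S1 q = (\<Sum>k\<in>UNIV. c k * (Lk q k / bar x $ k)^2)" for q
  define S3 where "S3 q = b * (\<Sum>s\<in>{1..t}. 2 * (g s \<bullet> q)^2)" for q
  have P2e: "P2 c a b t g q q x = S1 q + 2 * a * (q \<bullet> q) + S3 q" for q
    unfolding P2_def S1_def S3_def by (auto simp: power2_eq_square field_simps intro!: sum.cong)
  have S10: "S1 q \<ge> 0" for q unfolding S1_def
    by (intro sum_nonneg) (auto intro!: mult_nonneg_nonneg less_imp_le[OF cpos])
  have S30: "S3 q \<ge> 0" for q unfolding S3_def
    by (intro mult_nonneg_nonneg[OF ab(2)] sum_nonneg) simp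
  have ker: "\<forall>q. H *v q = 0 \<longrightarrow> q = 0"
  proof (intro allI impI)
    fix q assume "H *v q = 0"
    then have "P2 c a b t g q q x = 0" using Hq[of q] by simp
    then have "a * (q \<bullet> q) \<le> 0" using P2e[of q] S10[of q] S30[of q] by linarith
    then have "q \<bullet> q \<le> 0" using ab(1) by (simp add: mult_le_0_iff)
    then show "q = 0" by (metis antisym inner_ge_zero inner_eq_zero_iff)
  qed
  then obtain B where "B ** H = mat 1" using matrix_left_invertible_ker by blast
  then have "H ** B = mat 1 \<and> B ** H = mat 1" using matrix_left_right_inverse by blast
  then have "H ** matrix_inv H = mat 1 \<and> matrix_inv H ** H = mat 1"
    unfolding matrix_inv_def by (rule someI)
  then have Hp: "H *v p = nab" unfolding p by (simp add: matrix_vector_mul_assoc)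
  define D where "D = nab \<bullet> p"
  have D: "D = P2 c a b t g p p x" unfolding D_def using Hq[of p] Hp by simp
  have D0: "D \<ge> 0" using D P2e[of p] S10[of p] S30[of p] ab(1) by simp
  define \<theta> where "\<theta> = 1 / (1 + 4 * sqrt E * sqrt D)"
  have th0: "\<theta> > 0" unfolding \<theta>_def using E D0 by (simp add: add_pos_nonneg)
  have "0 < bar x $ k - \<theta> * Lk p k" for k
  proof -
    let ?y = "Lk p k / bar x $ k"
    have "c k * ?y^2 \<le> S1 p" unfolding S1_def
      by (rule member_le_sum) (auto intro!: mult_nonneg_nonneg less_imp_le[OF cpos])
    also have "\<dots> \<le> D" using D P2e[of p] S30[of p] ab(1) by simp
    finally have cy: "c k * ?y^2 \<le> D" .
    have "1 \<le> E * c k" using cE E by (simp add: field_simps)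
    then have "1 * ?y^2 \<le> (E * c k) * ?y^2" by (intro mult_right_mono) auto
    also have "\<dots> \<le> E * D" using cy E by (simp add: mult.assoc)
    finally have "?y^2 \<le> E * D" by simp
    then have "sqrt (?y^2) \<le> sqrt (E * D)" by (rule real_sqrt_le_mono)
    then have "\<bar>?y\<bar> \<le> sqrt E * sqrt D" by (simp add: real_sqrt_mult)
    then have Lb: "\<bar>Lk p k\<bar> \<le> sqrt E * sqrt D * bar x $ k"
      using bx[of k] by (simp add: abs_div field_simps)
    have "\<theta> * \<bar>Lk p k\<bar> \<le> \<theta> * (sqrt E * sqrt D * bar x $ k)"
      using Lb th0 by (intro mult_left_mono) auto
    also have "\<dots> < bar x $ k"
    proof -
      have s0: "sqrt E * sqrt D \<ge> 0" using E D0 by simp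
      have "\<theta> * (sqrt E * sqrt D) < 1"
        unfolding \<theta>_def using s0 by (simp add: field_simps)
      then show ?thesis using bx[of k] by (smt (verit) mult.assoc mult_less_cancel_right2)
    qed
    finally have "\<theta> * \<bar>Lk p k\<bar> < bar x $ k" .
    moreover have "\<theta> * Lk p k \<le> \<theta> * \<bar>Lk p k\<bar>" using th0 by (intro mult_left_mono) auto
    ultimately show ?thesis by linarith
  qed
  then show ?thesis unfolding Spos_def D_def[symmetric] \<theta>_def[symmetric] by (simp add: bar_diff)
qed


lemma Phi_eq:
  fixes rho :: "nat \<Rightarrow> real^('n::finite option)" and g w :: "nat \<Rightarrow> real^'n"
  shows "dons_Phi \<eta> \<beta> T rho g w t = PhiG (\<lambda>k. 1 / dons_eta \<eta> T (rho t) k) (\<beta> * dim_d TYPE('n) / 8) (\<beta> / 8) t g w"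
  by (rule ext) (simp add: dons_Phi_def dons_Psi_def PhiG_def power2_norm_eq_inner sum_negf[symmetric])

lemma eta_bound:
  fixes rho :: "real^('n::finite option)"
  assumes T: "T > 1" and eta: "\<eta> > 0" and r: "0 < rho $ i" "rho $ i \<le> dim_d TYPE('n) * real T"
  shows "0 < dons_eta \<eta> T rho i \<and> dons_eta \<eta> T rho i \<le> \<eta> * exp 1"
proof -
  have d0: "dim_d TYPE('n) > 0" by (simp add: dim_d_def)
  have q: "0 < rho $ i / dim_d TYPE('n)" "rho $ i / dim_d TYPE('n) \<le> real T"
    using r d0 by (auto simp: field_simps)
  have T1: "1 < real T" using T by simp
  have "log (real T) (rho $ i / dim_d TYPE('n)) \<le> log (real T) (real T)"
    using q T1 by (subst log_le_cancel_iff) auto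
  also have "\<dots> = 1" using T1 by simp
  finally have "exp (log (real T) (rho $ i / dim_d TYPE('n))) \<le> exp 1" by simp
  then show ?thesis unfolding dons_eta_def using eta by simp
qed

lemma bar_u:
  fixes w :: "real^'n::finite"
  assumes T: "T > 0"
  shows "bar ((1 - 1 / T) *\<^sub>R w + (1 / (real CARD('n option) * T)) *\<^sub>R (\<chi> i. 1)) $ k
    = (1 - 1 / T) * bar w $ k + 1 / (real CARD('n option) * T)"
proof (cases k)
  case None
  have c: "real CARD('n option) = real CARD('n) + 1" by simp
  have s: "(\<Sum>j\<in>UNIV. (1 - 1/T) * w$j + 1/(real CARD('n option)*T)) = (1 - 1/T) * (\<Sum>j\<in>UNIV. w$j) + real CARD('n) / (real CARD('n option)*T)"
    by (simp add: sum.distrib sum_distrib_left)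
  have b: "bar ((1 - 1 / T) *\<^sub>R w + (1 / (real CARD('n option) * T)) *\<^sub>R (\<chi> i. 1)) $ None
     = 1 - (\<Sum>j\<in>UNIV. (1 - 1/T) * w$j + 1/(real CARD('n option)*T))"
    by (simp add: bar_def)
  have bw: "bar w $ None = 1 - (\<Sum>j\<in>UNIV. w$j)" by (simp add: bar_def)
  have nz: "T + T * real CARD('n) \<noteq> 0" using T by (smt (verit) mult_nonneg_nonneg of_nat_0_le_iff)
  have key: "real CARD('n) / (real CARD('n option) * T) = 1 / T - 1 / (real CARD('n option) * T)"
  proof -
    have T0: "T \<noteq> 0" using T by simp
    have n0: "1 + real CARD('n) \<noteq> 0" by (simp add: add_pos_nonneg)
    have "1 / T - 1 / ((1 + real CARD('n)) * T) = real CARD('n) / ((1 + real CARD('n)) * T)"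
      using T0 n0 nz by (simp add: field_simps add_divide_distrib[symmetric])
    then show ?thesis using c by (simp add: add.commute)
  qed
  show ?thesis unfolding None b s bw key
    by (simp add: algebra_simps)
next
  case (Some j)
  then show ?thesis by (simp add: bar_def)
qed

theorem lemma5:
  fixes r :: "nat \<Rightarrow> real^('n::finite option)"
    and rho :: "nat \<Rightarrow> real^('n option)"
    and w u g nab :: "nat \<Rightarrow> real^'n"
    and \<eta> \<beta> :: real and T :: nat
  defines "d \<equiv> real CARD('n option)"
  assumes T: "T > 1" and eta: "\<eta> > 0" and beta: "\<beta> > 0"
    and returns: "\<forall>t\<ge>1. (\<forall>i. 0 \<le> r t $ i \<and> r t $ i \<le> 1) \<and> r t \<noteq> 0"
    and w1: "w 1 = (\<chi> i. 1 / d)"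
    and rho0: "rho 0 = (\<chi> i. d)"
    and u_def: "\<forall>t\<ge>1. u t = (1 - 1 / real T) *\<^sub>R w t + (1 / (d * real T)) *\<^sub>R (\<chi> i. 1)"
    and g_def: "\<forall>t\<ge>1. g t = (1 / (r t \<bullet> bar (u t))) *\<^sub>R Jmap (r t)"
    and rho_def: "\<forall>t\<ge>1. \<forall>i. rho t $ i =
        (if 2 * rho (t - 1) $ i < 1 / (bar (u t) $ i) then 1 / (bar (u t) $ i) else rho (t - 1) $ i)"
    and nab_def: "\<forall>t\<ge>1. nab t = grad (dons_Phi \<eta> \<beta> T rho g w t) (w t)
        + (\<Sum>s\<in>{1..t}. g s - grad (dons_Psi \<eta> T (rho s)) (w s) + grad (dons_Psi \<eta> T (rho (s - 1))) (w s))"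
    and w_def: "\<forall>t\<ge>1. w (t + 1) = w t -
        (1 / (1 + 4 * sqrt (exp 1 * \<eta>) *
           sqrt (nab t \<bullet> (matrix_inv (hess (dons_Phi \<eta> \<beta> T rho g w t) (w t)) *v nab t))))
        *\<^sub>R (matrix_inv (hess (dons_Phi \<eta> \<beta> T rho g w t) (w t)) *v nab t)"
  shows "\<forall>t\<ge>1. \<exists>M. M \<le> sqrt (\<eta> * exp 1) \<and> self_concordant simplexC (dons_Phi \<eta> \<beta> T rho g w t) M"
proof -
  have dd: "dim_d TYPE('n) = d" by (simp add: d_def dim_d_def)
  have d0: "d > 0" by (simp add: d_def)
  have dc: "d = real CARD('n) + 1" by (simp add: d_def)
  have T0: "real T > 0" using T by simp
  define E where "E = \<eta> * exp 1"
  have E0: "E > 0" using eta by (simp add: E_def)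
  define R where "R t \<longleftrightarrow> (\<forall>i. 0 < rho t $ i \<and> rho t $ i \<le> d * real T)" for t
  have cE: "\<forall>k. 1 / E \<le> 1 / dons_eta \<eta> T (rho t) k" if "R t" for t
  proof
    fix k
    have "0 < dons_eta \<eta> T (rho t) k \<and> dons_eta \<eta> T (rho t) k \<le> E"
      using eta_bound[OF T eta, of "rho t" k] that unfolding R_def E_def dd by auto
    then show "1 / E \<le> 1 / dons_eta \<eta> T (rho t) k" by (simp add: frac_le)
  qed
  have a0: "\<beta> * dim_d TYPE('n) / 8 > 0" using beta d0 dd by simp
  have b0: "\<beta> / 8 \<ge> 0" using beta by simp
  have inv: "R t \<and> (t \<ge> 1 \<longrightarrow> w t \<in> Spos)" for t
  proof (induction t)
    case 0
    have "d \<le> d * real T" using T d0 by simp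
    then show ?case using d0 by (simp add: R_def rho0)
  next
    case (Suc t)
    have W: "w (Suc t) \<in> Spos"
    proof (cases "t = 0")
      case True
      have w1': "w (Suc 0) = (\<chi> i. 1 / d)" using w1 by simp
      have "bar (w 1) $ k > 0" for k
        using d0 by (cases k) (auto simp: w1' bar_def dc field_simps)
      then show ?thesis using True by (simp add: Spos_def)
    next
      case False
      then have t1: "t \<ge> 1" by simp
      then have wt: "w t \<in> Spos" and Rt: "R t" using Suc.IH by auto
      have "w (t + 1) = w t -
        (1 / (1 + 4 * sqrt E *
           sqrt (nab t \<bullet> (matrix_inv (hess (dons_Phi \<eta> \<beta> T rho g w t) (w t)) *v nab t))))
        *\<^sub>R (matrix_inv (hess (dons_Phi \<eta> \<beta> T rho g w t) (w t)) *v nab t)"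
        using w_def t1 by (simp add: E_def mult.commute)
      moreover have "\<dots> \<in> Spos"
        by (rule newton_step[OF wt E0 cE[OF Rt] a0 b0 _ refl]) (simp add: Phi_eq)
      ultimately show ?thesis by simp
    qed
    have "0 < rho (Suc t) $ i \<and> rho (Suc t) $ i \<le> d * real T" for i
    proof -
      have bw: "bar (w (Suc t)) $ i > 0" using W by (simp add: Spos_def)
      have bu: "bar (u (Suc t)) $ i = (1 - 1 / real T) * bar (w (Suc t)) $ i + 1 / (d * real T)"
        using u_def bar_u[OF T0, of "w (Suc t)" i] by (simp add: d_def)
      have "1 - 1 / real T \<ge> 0" using T by simp
      then have bu1: "bar (u (Suc t)) $ i \<ge> 1 / (d * real T)"
        using bu bw by (simp add: less_imp_le)
      have bu0: "bar (u (Suc t)) $ i > 0" using bu1 d0 T0 by (smt (verit) divide_pos_pos mult_pos_pos)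
      have up: "1 / bar (u (Suc t)) $ i \<le> d * real T"
        using bu1 bu0 d0 T0 by (simp add: field_simps)
      have Rt: "R t" using Suc.IH by blast
      show ?thesis
        using rho_def[rule_format, of "Suc t" i] Rt up bu0 unfolding R_def by auto
    qed
    then show ?case using W by (simp add: R_def)
  qed
  show ?thesis
  proof (intro allI impI exI conjI)
    fix t :: nat assume "t \<ge> 1"
    show "sqrt (\<eta> * exp 1) \<le> sqrt (\<eta> * exp 1)" by simp
    have "self_concordant simplexC (PhiG (\<lambda>k. 1 / dons_eta \<eta> T (rho t) k) (\<beta> * dim_d TYPE('n) / 8) (\<beta> / 8) t g w) (sqrt E)"
      by (rule sc_PhiG[OF E0 cE[OF inv[THEN conjunct1]] less_imp_le[OF a0] b0])
    then show "self_concordant simplexC (dons_Phi \<eta> \<beta> T rho g w t) (sqrt (\<eta> * exp 1))"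
      by (simp add: Phi_eq E_def)
  qed
qed

end
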